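(* Let $R_1\xleftarrow{f}R_{12}\xrightarrow{g}R_2$ be a weakly admissible correspondence in $\mathrm{DGRings}^{0,-1}$. Then: (i) $f$ is surjective; (ii) $\ker f$ is acyclic; (iii) the DG ideal $I\subset R_{12}$ generated by $\ker(R_{12}^{-1}\to R_1^{-1}\times R_2^{-1})$ is acyclic; (iv) the correspondence $R_1\leftarrow R_{12}/I\to R_2$ (with maps induced by $f,g$) is the admissibilization $\mathrm{Adm}$ of the given correspondence.
   Context: Rings are commutative and unital. $\mathrm{DGRings}^{0,-1}$ is the category of commutative DG rings $R$ with $R^i=0$ for $i\ne 0,-1$. Equivalently, such $R$ is a ring $R^0$, an $R^0$-module $R^{-1}$ and an $R^0$-linear $d:R^{-1}\to R^0$ with $d(x)y=d(y)x$. Quasi-isomorphisms are morphisms inducing isomorphisms on $\ker d$ and $\operatorname{coker} d$. A correspondence is a diagram $R_1\xleftarrow{f}R_{12}\xrightarrow{g}R_2$ in $\mathrm{DGRings}^{0,-1}$. Morphisms are maps $h$ of middle terms with $f'h=f$, $g'h=g$. A correspondence is admissible (resp. weakly admissible) if $f$ is a quasi-isomorphism and $R_{12}^{-1}\to R_1^{-1}\times R_2^{-1}$ is an isomorphism (resp. surjective). It is an anamorphism if $f$ is a surjective quasi-isomorphism. Weakly admissible correspondences are anamorphisms. $\mathrm{Adm}$ denotes the left adjoint of the inclusion of admissible correspondences into anamorphisms (from $R_1$ to $R_2$). *)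

theory Defs
  imports "HOL-Algebra.Algebra"
begin

text \<open>A DG ring R in DGRings^{0,-1} is given by the ring R^0 (field deg0),
  the R^0-module R^{-1} (field deg1) and the differential d : R^{-1} -> R^0 (field dd).\<close>

record ('a, 'b) dgr =
  deg0 :: "'a ring"
  deg1 :: "('a, 'b) module"
  dd   :: "'b \<Rightarrow> 'a"

definition dgring :: "('a, 'b) dgr \<Rightarrow> bool" where
  "dgring R \<longleftrightarrow>
     cring (deg0 R) \<and> module (deg0 R) (deg1 R) \<and>
     dd R \<in> carrier (deg1 R) \<rightarrow> carrier (deg0 R) \<and>
     (\<forall>x\<in>carrier (deg1 R). \<forall>y\<in>carrier (deg1 R).
        dd R (x \<oplus>\<^bsub>deg1 R\<^esub> y) = dd R x \<oplus>\<^bsub>deg0 R\<^esub> dd R y) \<and>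
     (\<forall>r\<in>carrier (deg0 R). \<forall>x\<in>carrier (deg1 R).
        dd R (r \<odot>\<^bsub>deg1 R\<^esub> x) = r \<otimes>\<^bsub>deg0 R\<^esub> dd R x) \<and>
     (\<forall>x\<in>carrier (deg1 R). \<forall>y\<in>carrier (deg1 R).
        dd R x \<odot>\<^bsub>deg1 R\<^esub> y = dd R y \<odot>\<^bsub>deg1 R\<^esub> x)"

definition dg_hom :: "('a, 'b) dgr \<Rightarrow> ('c, 'e) dgr \<Rightarrow> ('a \<Rightarrow> 'c) \<times> ('b \<Rightarrow> 'e) \<Rightarrow> bool" where
  "dg_hom R S h \<longleftrightarrow>
     fst h \<in> ring_hom (deg0 R) (deg0 S) \<and>
     snd h \<in> carrier (deg1 R) \<rightarrow> carrier (deg1 S) \<and>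
     (\<forall>x\<in>carrier (deg1 R). \<forall>y\<in>carrier (deg1 R).
        snd h (x \<oplus>\<^bsub>deg1 R\<^esub> y) = snd h x \<oplus>\<^bsub>deg1 S\<^esub> snd h y) \<and>
     (\<forall>r\<in>carrier (deg0 R). \<forall>x\<in>carrier (deg1 R).
        snd h (r \<odot>\<^bsub>deg1 R\<^esub> x) = fst h r \<odot>\<^bsub>deg1 S\<^esub> snd h x) \<and>
     (\<forall>x\<in>carrier (deg1 R). dd S (snd h x) = fst h (dd R x))"

definition dg_comp :: "('c \<Rightarrow> 'g) \<times> ('e \<Rightarrow> 'i) \<Rightarrow> ('a \<Rightarrow> 'c) \<times> ('b \<Rightarrow> 'e) \<Rightarrow> ('a \<Rightarrow> 'g) \<times> ('b \<Rightarrow> 'i)" where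
  "dg_comp k h = (fst k \<circ> fst h, snd k \<circ> snd h)"

definition dg_eq :: "('a, 'b) dgr \<Rightarrow> ('a \<Rightarrow> 'c) \<times> ('b \<Rightarrow> 'e) \<Rightarrow> ('a \<Rightarrow> 'c) \<times> ('b \<Rightarrow> 'e) \<Rightarrow> bool" where
  "dg_eq R h k \<longleftrightarrow> (\<forall>r\<in>carrier (deg0 R). fst h r = fst k r) \<and>
                    (\<forall>x\<in>carrier (deg1 R). snd h x = snd k x)"

definition dg_cycles :: "('a, 'b) dgr \<Rightarrow> 'b set" where
  "dg_cycles R = {x \<in> carrier (deg1 R). dd R x = \<zero>\<^bsub>deg0 R\<^esub>}"

text \<open>Quasi-isomorphism: the induced maps on ker d and on coker d = R^0 / d(R^{-1})
  are bijective (they are automatically linear).\<close>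

definition quasi_iso :: "('a, 'b) dgr \<Rightarrow> ('c, 'e) dgr \<Rightarrow> ('a \<Rightarrow> 'c) \<times> ('b \<Rightarrow> 'e) \<Rightarrow> bool" where
  "quasi_iso R S h \<longleftrightarrow> dg_hom R S h \<and>
     bij_betw (snd h) (dg_cycles R) (dg_cycles S) \<and>
     (\<forall>s\<in>carrier (deg0 S). \<exists>r\<in>carrier (deg0 R). \<exists>y\<in>carrier (deg1 S).
        s = fst h r \<oplus>\<^bsub>deg0 S\<^esub> dd S y) \<and>
     (\<forall>r\<in>carrier (deg0 R). fst h r \<in> dd S ` carrier (deg1 S) \<longrightarrow> r \<in> dd R ` carrier (deg1 R))"

definition dg_surj :: "('a, 'b) dgr \<Rightarrow> ('c, 'e) dgr \<Rightarrow> ('a \<Rightarrow> 'c) \<times> ('b \<Rightarrow> 'e) \<Rightarrow> bool" where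
  "dg_surj R S h \<longleftrightarrow> fst h ` carrier (deg0 R) = carrier (deg0 S) \<and>
                     snd h ` carrier (deg1 R) = carrier (deg1 S)"

definition dg_ideal :: "('a, 'b) dgr \<Rightarrow> 'a set \<times> 'b set \<Rightarrow> bool" where
  "dg_ideal R J \<longleftrightarrow>
     ideal (fst J) (deg0 R) \<and>
     subgroup (snd J) (add_monoid (deg1 R)) \<and>
     (\<forall>r\<in>carrier (deg0 R). \<forall>x\<in>snd J. r \<odot>\<^bsub>deg1 R\<^esub> x \<in> snd J) \<and>
     (\<forall>a\<in>fst J. \<forall>x\<in>carrier (deg1 R). a \<odot>\<^bsub>deg1 R\<^esub> x \<in> snd J) \<and>
     dd R ` snd J \<subseteq> fst J"

definition dg_ideal_gen :: "('a, 'b) dgr \<Rightarrow> 'b set \<Rightarrow> 'a set \<times> 'b set" where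
  "dg_ideal_gen R K =
     (\<Inter>{fst J | J. dg_ideal R J \<and> K \<subseteq> snd J}, \<Inter>{snd J | J. dg_ideal R J \<and> K \<subseteq> snd J})"

definition dg_acyclic :: "('a, 'b) dgr \<Rightarrow> 'a set \<times> 'b set \<Rightarrow> bool" where
  "dg_acyclic R J \<longleftrightarrow>
     {x \<in> snd J. dd R x = \<zero>\<^bsub>deg0 R\<^esub>} = {\<zero>\<^bsub>deg1 R\<^esub>} \<and> fst J \<subseteq> dd R ` snd J"

definition dg_kernel :: "('a, 'b) dgr \<Rightarrow> ('c, 'e) dgr \<Rightarrow> ('a \<Rightarrow> 'c) \<times> ('b \<Rightarrow> 'e) \<Rightarrow> 'a set \<times> 'b set" where
  "dg_kernel R S h =
     ({r \<in> carrier (deg0 R). fst h r = \<zero>\<^bsub>deg0 S\<^esub>}, {x \<in> carrier (deg1 R). snd h x = \<zero>\<^bsub>deg1 S\<^esub>})"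

definition quot_module :: "('a, 'b) dgr \<Rightarrow> 'b set \<Rightarrow> ('a set, 'b set) module" where
  "quot_module R J1 =
     \<lparr> carrier = a_rcosets\<^bsub>deg1 R\<^esub> J1,
       monoid.mult = undefined, one = undefined,
       ring.zero = J1, ring.add = set_add (deg1 R),
       module.smult = (\<lambda>A B. a_r_coset (deg1 R) J1 (smult (deg1 R) (SOME r. r \<in> A) (SOME y. y \<in> B))) \<rparr>"

definition dg_quot :: "('a, 'b) dgr \<Rightarrow> 'a set \<times> 'b set \<Rightarrow> ('a set, 'b set) dgr" where
  "dg_quot R J =
     \<lparr> deg0 = deg0 R Quot fst J,
       deg1 = quot_module R (snd J),
       dd = (\<lambda>B. a_r_coset (deg0 R) (fst J) (dd R (SOME y. y \<in> B))) \<rparr>"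

text \<open>The quotient map R -> R/J, and the map R/J -> S induced by h (for J \<subseteq> ker h).\<close>

definition dg_quot_map :: "('a, 'b) dgr \<Rightarrow> 'a set \<times> 'b set \<Rightarrow> ('a \<Rightarrow> 'a set) \<times> ('b \<Rightarrow> 'b set)" where
  "dg_quot_map R J = ((\<lambda>r. fst J +>\<^bsub>deg0 R\<^esub> r), (\<lambda>x. snd J +>\<^bsub>deg1 R\<^esub> x))"

definition dg_induced :: "('a \<Rightarrow> 'c) \<times> ('b \<Rightarrow> 'e) \<Rightarrow> ('a set \<Rightarrow> 'c) \<times> ('b set \<Rightarrow> 'e)" where
  "dg_induced h = ((\<lambda>A. fst h (SOME r. r \<in> A)), (\<lambda>B. snd h (SOME y. y \<in> B)))"

definition corr :: "('a, 'b) dgr \<Rightarrow> ('c, 'e) dgr \<Rightarrow> ('g, 'i) dgr \<Rightarrow>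
    ('c \<Rightarrow> 'a) \<times> ('e \<Rightarrow> 'b) \<Rightarrow> ('c \<Rightarrow> 'g) \<times> ('e \<Rightarrow> 'i) \<Rightarrow> bool" where
  "corr R1 R12 R2 f g \<longleftrightarrow> dgring R1 \<and> dgring R12 \<and> dgring R2 \<and>
     dg_hom R12 R1 f \<and> dg_hom R12 R2 g"

definition admissible :: "('a, 'b) dgr \<Rightarrow> ('c, 'e) dgr \<Rightarrow> ('g, 'i) dgr \<Rightarrow>
    ('c \<Rightarrow> 'a) \<times> ('e \<Rightarrow> 'b) \<Rightarrow> ('c \<Rightarrow> 'g) \<times> ('e \<Rightarrow> 'i) \<Rightarrow> bool" where
  "admissible R1 R12 R2 f g \<longleftrightarrow> corr R1 R12 R2 f g \<and> quasi_iso R12 R1 f \<and>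
     bij_betw (\<lambda>x. (snd f x, snd g x)) (carrier (deg1 R12)) (carrier (deg1 R1) \<times> carrier (deg1 R2))"

definition weakly_admissible :: "('a, 'b) dgr \<Rightarrow> ('c, 'e) dgr \<Rightarrow> ('g, 'i) dgr \<Rightarrow>
    ('c \<Rightarrow> 'a) \<times> ('e \<Rightarrow> 'b) \<Rightarrow> ('c \<Rightarrow> 'g) \<times> ('e \<Rightarrow> 'i) \<Rightarrow> bool" where
  "weakly_admissible R1 R12 R2 f g \<longleftrightarrow> corr R1 R12 R2 f g \<and> quasi_iso R12 R1 f \<and>
     (\<lambda>x. (snd f x, snd g x)) ` carrier (deg1 R12) = carrier (deg1 R1) \<times> carrier (deg1 R2)"

definition anamorphism :: "('a, 'b) dgr \<Rightarrow> ('c, 'e) dgr \<Rightarrow> ('g, 'i) dgr \<Rightarrow>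
    ('c \<Rightarrow> 'a) \<times> ('e \<Rightarrow> 'b) \<Rightarrow> ('c \<Rightarrow> 'g) \<times> ('e \<Rightarrow> 'i) \<Rightarrow> bool" where
  "anamorphism R1 R12 R2 f g \<longleftrightarrow> corr R1 R12 R2 f g \<and> quasi_iso R12 R1 f \<and> dg_surj R12 R1 f"

definition corr_mor :: "('a, 'b) dgr \<Rightarrow> ('g, 'i) dgr \<Rightarrow>
    ('c, 'e) dgr \<Rightarrow> ('c \<Rightarrow> 'a) \<times> ('e \<Rightarrow> 'b) \<Rightarrow> ('c \<Rightarrow> 'g) \<times> ('e \<Rightarrow> 'i) \<Rightarrow>
    ('k, 'l) dgr \<Rightarrow> ('k \<Rightarrow> 'a) \<times> ('l \<Rightarrow> 'b) \<Rightarrow> ('k \<Rightarrow> 'g) \<times> ('l \<Rightarrow> 'i) \<Rightarrow>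
    ('c \<Rightarrow> 'k) \<times> ('e \<Rightarrow> 'l) \<Rightarrow> bool" where
  "corr_mor R1 R2 R12 f g S f' g' h \<longleftrightarrow> dg_hom R12 S h \<and>
     dg_eq R12 (dg_comp f' h) f \<and> dg_eq R12 (dg_comp g' h) g"

text \<open>Adm: the left adjoint of the inclusion of admissible correspondences into
  anamorphisms from R1 to R2.\<close>

definition is_Adm :: "('a, 'b) dgr \<Rightarrow> ('g, 'i) dgr \<Rightarrow>
    ('c, 'e) dgr \<Rightarrow> ('c \<Rightarrow> 'a) \<times> ('e \<Rightarrow> 'b) \<Rightarrow> ('c \<Rightarrow> 'g) \<times> ('e \<Rightarrow> 'i) \<Rightarrow>
    ('k, 'l) dgr \<Rightarrow> ('k \<Rightarrow> 'a) \<times> ('l \<Rightarrow> 'b) \<Rightarrow> ('k \<Rightarrow> 'g) \<times> ('l \<Rightarrow> 'i) \<Rightarrow>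
    ('c \<Rightarrow> 'k) \<times> ('e \<Rightarrow> 'l) \<Rightarrow> ('m, 'n) dgr itself \<Rightarrow> bool" where
  "is_Adm R1 R2 R12 f g T f' g' u (_ :: ('m, 'n) dgr itself) \<longleftrightarrow>
     anamorphism R1 R12 R2 f g \<and>
     admissible R1 T R2 f' g' \<and>
     corr_mor R1 R2 R12 f g T f' g' u \<and>
     (\<forall>(S :: ('m, 'n) dgr) f'' g'' h. admissible R1 S R2 f'' g'' \<and>
        corr_mor R1 R2 R12 f g S f'' g'' h \<longrightarrow>
        (\<exists>k. corr_mor R1 R2 T f' g' S f'' g'' k \<and> dg_eq R12 (dg_comp k u) h \<and>
           (\<forall>k'. corr_mor R1 R2 T f' g' S f'' g'' k' \<and> dg_eq R12 (dg_comp k' u) h \<longrightarrow>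
                 dg_eq T k' k)))"

end

theory Submission
  imports Defs
begin

lemma dgringD:
  assumes "dgring R"
  shows "cring (deg0 R)" "module (deg0 R) (deg1 R)"
    "\<And>x. x \<in> carrier (deg1 R) \<Longrightarrow> dd R x \<in> carrier (deg0 R)"
    "\<And>x y. x\<in>carrier (deg1 R) \<Longrightarrow> y\<in>carrier (deg1 R) \<Longrightarrow>
        dd R (x \<oplus>\<^bsub>deg1 R\<^esub> y) = dd R x \<oplus>\<^bsub>deg0 R\<^esub> dd R y"
    "\<And>r x. r\<in>carrier (deg0 R) \<Longrightarrow> x\<in>carrier (deg1 R) \<Longrightarrow>
        dd R (r \<odot>\<^bsub>deg1 R\<^esub> x) = r \<otimes>\<^bsub>deg0 R\<^esub> dd R x"
    "\<And>x y. x\<in>carrier (deg1 R) \<Longrightarrow> y\<in>carrier (deg1 R) \<Longrightarrow>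
        dd R x \<odot>\<^bsub>deg1 R\<^esub> y = dd R y \<odot>\<^bsub>deg1 R\<^esub> x"
  using assms unfolding dgring_def by auto

lemma dg_homD:
  assumes "dg_hom R S h"
  shows "fst h \<in> ring_hom (deg0 R) (deg0 S)"
    "\<And>x. x \<in> carrier (deg1 R) \<Longrightarrow> snd h x \<in> carrier (deg1 S)"
    "\<And>x y. x\<in>carrier (deg1 R) \<Longrightarrow> y\<in>carrier (deg1 R) \<Longrightarrow>
        snd h (x \<oplus>\<^bsub>deg1 R\<^esub> y) = snd h x \<oplus>\<^bsub>deg1 S\<^esub> snd h y"
    "\<And>r x. r\<in>carrier (deg0 R) \<Longrightarrow> x\<in>carrier (deg1 R) \<Longrightarrow>
        snd h (r \<odot>\<^bsub>deg1 R\<^esub> x) = fst h r \<odot>\<^bsub>deg1 S\<^esub> snd h x"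
    "\<And>x. x\<in>carrier (deg1 R) \<Longrightarrow> dd S (snd h x) = fst h (dd R x)"
  using assms unfolding dg_hom_def by auto

lemma hom0_cring:
  assumes "dgring R" "dgring S" "dg_hom R S h"
  shows "ring_hom_cring (deg0 R) (deg0 S) (fst h)"
  using dgringD(1)[OF assms(1)] dgringD(1)[OF assms(2)] dg_homD(1)[OF assms(3)]
  by (simp add: ring_hom_cring_def ring_hom_cring_axioms_def)

lemma dd_zero:
  assumes "dgring R"
  shows "dd R \<zero>\<^bsub>deg1 R\<^esub> = \<zero>\<^bsub>deg0 R\<^esub>"
proof -
  interpret M: module "deg0 R" "deg1 R" using dgringD[OF assms] by simp
  have "dd R \<zero>\<^bsub>deg1 R\<^esub> = dd R (\<zero>\<^bsub>deg0 R\<^esub> \<odot>\<^bsub>deg1 R\<^esub> \<zero>\<^bsub>deg1 R\<^esub>)" by simp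
  also have "\<dots> = \<zero>\<^bsub>deg0 R\<^esub> \<otimes>\<^bsub>deg0 R\<^esub> dd R \<zero>\<^bsub>deg1 R\<^esub>"
    by (rule dgringD(5)[OF assms]) simp_all
  also have "\<dots> = \<zero>\<^bsub>deg0 R\<^esub>" using dgringD(3)[OF assms] by simp
  finally show ?thesis .
qed

lemma dd_neg:
  assumes "dgring R" "x \<in> carrier (deg1 R)"
  shows "dd R (\<ominus>\<^bsub>deg1 R\<^esub> x) = \<ominus>\<^bsub>deg0 R\<^esub> dd R x"
proof -
  interpret M: module "deg0 R" "deg1 R" using dgringD[OF assms(1)] by simp
  have "dd R (\<ominus>\<^bsub>deg1 R\<^esub> x) = dd R ((\<ominus>\<^bsub>deg0 R\<^esub> \<one>\<^bsub>deg0 R\<^esub>) \<odot>\<^bsub>deg1 R\<^esub> x)"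
    using assms(2) by (simp add: M.smult_l_minus)
  also have "\<dots> = (\<ominus>\<^bsub>deg0 R\<^esub> \<one>\<^bsub>deg0 R\<^esub>) \<otimes>\<^bsub>deg0 R\<^esub> dd R x"
    by (rule dgringD(5)[OF assms(1)]) (simp_all add: assms)
  also have "\<dots> = \<ominus>\<^bsub>deg0 R\<^esub> dd R x" using dgringD(3)[OF assms] by (simp add: M.l_minus)
  finally show ?thesis .
qed

lemma hom1_zero:
  assumes "dgring R" "dgring S" "dg_hom R S h"
  shows "snd h \<zero>\<^bsub>deg1 R\<^esub> = \<zero>\<^bsub>deg1 S\<^esub>"
proof -
  interpret R: module "deg0 R" "deg1 R" using dgringD[OF assms(1)] by simp
  interpret S: module "deg0 S" "deg1 S" using dgringD[OF assms(2)] by simp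
  interpret H: ring_hom_cring "deg0 R" "deg0 S" "fst h" by (rule hom0_cring[OF assms])
  have "snd h \<zero>\<^bsub>deg1 R\<^esub> = snd h (\<zero>\<^bsub>deg0 R\<^esub> \<odot>\<^bsub>deg1 R\<^esub> \<zero>\<^bsub>deg1 R\<^esub>)" by simp
  also have "\<dots> = fst h \<zero>\<^bsub>deg0 R\<^esub> \<odot>\<^bsub>deg1 S\<^esub> snd h \<zero>\<^bsub>deg1 R\<^esub>"
    by (rule dg_homD(4)[OF assms(3)]) simp_all
  also have "\<dots> = \<zero>\<^bsub>deg1 S\<^esub>"
    using dg_homD(2)[OF assms(3)] by simp
  finally show ?thesis .
qed

lemma hom1_neg:
  assumes "dgring R" "dgring S" "dg_hom R S h" "x \<in> carrier (deg1 R)"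
  shows "snd h (\<ominus>\<^bsub>deg1 R\<^esub> x) = \<ominus>\<^bsub>deg1 S\<^esub> snd h x"
proof -
  interpret R: module "deg0 R" "deg1 R" using dgringD[OF assms(1)] by simp
  interpret S: module "deg0 S" "deg1 S" using dgringD[OF assms(2)] by simp
  interpret H: ring_hom_cring "deg0 R" "deg0 S" "fst h" by (rule hom0_cring[OF assms(1-3)])
  have "snd h (\<ominus>\<^bsub>deg1 R\<^esub> x) = snd h ((\<ominus>\<^bsub>deg0 R\<^esub> \<one>\<^bsub>deg0 R\<^esub>) \<odot>\<^bsub>deg1 R\<^esub> x)"
    using assms(4) by (simp add: R.smult_l_minus)
  also have "\<dots> = fst h (\<ominus>\<^bsub>deg0 R\<^esub> \<one>\<^bsub>deg0 R\<^esub>) \<odot>\<^bsub>deg1 S\<^esub> snd h x"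
    by (rule dg_homD(4)[OF assms(3)]) (simp_all add: assms)
  also have "\<dots> = \<ominus>\<^bsub>deg1 S\<^esub> snd h x"
    using dg_homD(2)[OF assms(3) assms(4)] by (simp add: S.smult_l_minus)
  finally show ?thesis .
qed


locale dgq =
  fixes R :: "('a,'b) dgr" and J0 :: "'a set" and J1 :: "'b set"
  assumes dgr: "dgring R" and dgi: "dg_ideal R (J0, J1)"
begin

sublocale M: module "deg0 R" "deg1 R" by (rule dgringD(2)[OF dgr])
sublocale I0: ideal J0 "deg0 R" using dgi by (simp add: dg_ideal_def)
sublocale J: abelian_subgroup J1 "deg1 R"
  using dgi by (intro abelian_subgroupI3) (simp_all add: dg_ideal_def additive_subgroup_def module.axioms(2)[OF dgringD(2)[OF dgr]])

lemma ab0: "abelian_group (deg0 R)" by (rule M.R.is_abelian_group)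
lemma ab1: "abelian_group (deg1 R)" by (rule module.axioms(2)[OF dgringD(2)[OF dgr]])

lemma J1_smult: "r \<in> carrier (deg0 R) \<Longrightarrow> x \<in> J1 \<Longrightarrow> r \<odot>\<^bsub>deg1 R\<^esub> x \<in> J1"
  using dgi by (simp add: dg_ideal_def)
lemma J0_smult: "a \<in> J0 \<Longrightarrow> x \<in> carrier (deg1 R) \<Longrightarrow> a \<odot>\<^bsub>deg1 R\<^esub> x \<in> J1"
  using dgi by (simp add: dg_ideal_def)
lemma dJ1: "x \<in> J1 \<Longrightarrow> dd R x \<in> J0"
  using dgi by (auto simp add: dg_ideal_def)

lemma some0: "r \<in> carrier (deg0 R) \<Longrightarrow> \<exists>i\<in>J0. (SOME s. s \<in> J0 +>\<^bsub>deg0 R\<^esub> r) = i \<oplus>\<^bsub>deg0 R\<^esub> r"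
proof -
  assume r: "r \<in> carrier (deg0 R)"
  have "r \<in> J0 +>\<^bsub>deg0 R\<^esub> r" using I0.a_rcos_self[OF r] .
  hence "(SOME s. s \<in> J0 +>\<^bsub>deg0 R\<^esub> r) \<in> J0 +>\<^bsub>deg0 R\<^esub> r" by (rule someI)
  thus ?thesis by (simp add: a_r_coset_def')
qed

lemma some1: "x \<in> carrier (deg1 R) \<Longrightarrow> \<exists>k\<in>J1. (SOME y. y \<in> J1 +>\<^bsub>deg1 R\<^esub> x) = k \<oplus>\<^bsub>deg1 R\<^esub> x"
proof -
  assume x: "x \<in> carrier (deg1 R)"
  have "x \<in> J1 +>\<^bsub>deg1 R\<^esub> x" using J.a_rcos_self[OF x] .
  hence "(SOME s. s \<in> J1 +>\<^bsub>deg1 R\<^esub> x) \<in> J1 +>\<^bsub>deg1 R\<^esub> x" by (rule someI)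
  thus ?thesis by (simp add: a_r_coset_def')
qed

lemma cos0_eq: "i \<in> J0 \<Longrightarrow> r \<in> carrier (deg0 R) \<Longrightarrow> J0 +>\<^bsub>deg0 R\<^esub> (i \<oplus>\<^bsub>deg0 R\<^esub> r) = J0 +>\<^bsub>deg0 R\<^esub> r"
  by (metis abelian_group.a_rcosI[OF ab0] abelian_group.a_repr_independence[OF ab0] I0.a_subgroup I0.a_subset)

lemma cos1_eq: "k \<in> J1 \<Longrightarrow> x \<in> carrier (deg1 R) \<Longrightarrow> J1 +>\<^bsub>deg1 R\<^esub> (k \<oplus>\<^bsub>deg1 R\<^esub> x) = J1 +>\<^bsub>deg1 R\<^esub> x"
  by (metis abelian_group.a_rcosI[OF ab1] abelian_group.a_repr_independence[OF ab1] J.a_subgroup J.a_subset)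

lemma Q_simps:
  "deg0 (dg_quot R (J0,J1)) = deg0 R Quot J0"
  "carrier (deg1 (dg_quot R (J0,J1))) = a_rcosets\<^bsub>deg1 R\<^esub> J1"
  "ring.zero (deg1 (dg_quot R (J0,J1))) = J1"
  "ring.add (deg1 (dg_quot R (J0,J1))) = set_add (deg1 R)"
  "module.smult (deg1 (dg_quot R (J0,J1))) A B =
     J1 +>\<^bsub>deg1 R\<^esub> ((SOME r. r \<in> A) \<odot>\<^bsub>deg1 R\<^esub> (SOME y. y \<in> B))"
  "dd (dg_quot R (J0,J1)) B = J0 +>\<^bsub>deg0 R\<^esub> (dd R (SOME y. y \<in> B))"
  by (simp_all add: dg_quot_def quot_module_def)

lemma carr0: "A \<in> carrier (deg0 R Quot J0) \<Longrightarrow> \<exists>r\<in>carrier (deg0 R). A = J0 +>\<^bsub>deg0 R\<^esub> r"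
  by (auto simp: FactRing_def A_RCOSETS_def')
lemma carr1: "A \<in> a_rcosets\<^bsub>deg1 R\<^esub> J1 \<Longrightarrow> \<exists>x\<in>carrier (deg1 R). A = J1 +>\<^bsub>deg1 R\<^esub> x"
  by (auto simp: A_RCOSETS_def')
lemma carr0I: "r \<in> carrier (deg0 R) \<Longrightarrow> J0 +>\<^bsub>deg0 R\<^esub> r \<in> carrier (deg0 R Quot J0)"
  unfolding FactRing_def by (simp, rule abelian_group.a_rcosetsI[OF ab0]) (simp_all add: I0.a_subset)
lemma carr1I: "x \<in> carrier (deg1 R) \<Longrightarrow> J1 +>\<^bsub>deg1 R\<^esub> x \<in> a_rcosets\<^bsub>deg1 R\<^esub> J1"
  by (rule abelian_group.a_rcosetsI[OF ab1]) (simp_all add: J.a_subset)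

lemma q_add0: "r \<in> carrier (deg0 R) \<Longrightarrow> s \<in> carrier (deg0 R) \<Longrightarrow>
   (J0 +>\<^bsub>deg0 R\<^esub> r) \<oplus>\<^bsub>deg0 R Quot J0\<^esub> (J0 +>\<^bsub>deg0 R\<^esub> s) = J0 +>\<^bsub>deg0 R\<^esub> (r \<oplus>\<^bsub>deg0 R\<^esub> s)"
  using ring_hom_add[OF I0.rcos_ring_hom] by simp
lemma q_mult0: "r \<in> carrier (deg0 R) \<Longrightarrow> s \<in> carrier (deg0 R) \<Longrightarrow>
   (J0 +>\<^bsub>deg0 R\<^esub> r) \<otimes>\<^bsub>deg0 R Quot J0\<^esub> (J0 +>\<^bsub>deg0 R\<^esub> s) = J0 +>\<^bsub>deg0 R\<^esub> (r \<otimes>\<^bsub>deg0 R\<^esub> s)"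
  using ring_hom_mult[OF I0.rcos_ring_hom] by simp
lemma q_one0: "\<one>\<^bsub>deg0 R Quot J0\<^esub> = J0 +>\<^bsub>deg0 R\<^esub> \<one>\<^bsub>deg0 R\<^esub>"
  by (simp add: FactRing_def)
lemma q_zero0: "\<zero>\<^bsub>deg0 R Quot J0\<^esub> = J0 +>\<^bsub>deg0 R\<^esub> \<zero>\<^bsub>deg0 R\<^esub>"
  by (simp add: FactRing_def I0.a_rcos_const)
lemma q_zero1: "J1 = J1 +>\<^bsub>deg1 R\<^esub> \<zero>\<^bsub>deg1 R\<^esub>"
  by (simp add: J.a_rcos_const)
lemma q_add1: "x \<in> carrier (deg1 R) \<Longrightarrow> y \<in> carrier (deg1 R) \<Longrightarrow>
   (J1 +>\<^bsub>deg1 R\<^esub> x) <+>\<^bsub>deg1 R\<^esub> (J1 +>\<^bsub>deg1 R\<^esub> y) = J1 +>\<^bsub>deg1 R\<^esub> (x \<oplus>\<^bsub>deg1 R\<^esub> y)"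
  by (rule J.a_rcos_sum)

lemma q_smult: "r \<in> carrier (deg0 R) \<Longrightarrow> x \<in> carrier (deg1 R) \<Longrightarrow>
  module.smult (deg1 (dg_quot R (J0,J1))) (J0 +>\<^bsub>deg0 R\<^esub> r) (J1 +>\<^bsub>deg1 R\<^esub> x) = J1 +>\<^bsub>deg1 R\<^esub> (r \<odot>\<^bsub>deg1 R\<^esub> x)"
proof -
  assume r: "r \<in> carrier (deg0 R)" and x: "x \<in> carrier (deg1 R)"
  obtain i where i: "i \<in> J0" "(SOME s. s \<in> J0 +>\<^bsub>deg0 R\<^esub> r) = i \<oplus>\<^bsub>deg0 R\<^esub> r" using some0[OF r] by blast
  obtain k where k: "k \<in> J1" "(SOME s. s \<in> J1 +>\<^bsub>deg1 R\<^esub> x) = k \<oplus>\<^bsub>deg1 R\<^esub> x" using some1[OF x] by blast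
  have ic: "i \<in> carrier (deg0 R)" using i(1) by simp
  have kc: "k \<in> carrier (deg1 R)" using k(1) by simp
  have "(i \<oplus>\<^bsub>deg0 R\<^esub> r) \<odot>\<^bsub>deg1 R\<^esub> (k \<oplus>\<^bsub>deg1 R\<^esub> x) =
     (i \<odot>\<^bsub>deg1 R\<^esub> (k \<oplus>\<^bsub>deg1 R\<^esub> x) \<oplus>\<^bsub>deg1 R\<^esub> r \<odot>\<^bsub>deg1 R\<^esub> k) \<oplus>\<^bsub>deg1 R\<^esub> r \<odot>\<^bsub>deg1 R\<^esub> x"
    using ic kc r x by (simp add: M.smult_l_distr M.smult_r_distr M.M.a_ac)
  moreover have "i \<odot>\<^bsub>deg1 R\<^esub> (k \<oplus>\<^bsub>deg1 R\<^esub> x) \<oplus>\<^bsub>deg1 R\<^esub> r \<odot>\<^bsub>deg1 R\<^esub> k \<in> J1"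
    using J0_smult[OF i(1)] J1_smult[OF r k(1)] kc x by simp
  ultimately show ?thesis using i k r x by (simp add: Q_simps cos1_eq)
qed

lemma q_dd: "x \<in> carrier (deg1 R) \<Longrightarrow> dd (dg_quot R (J0,J1)) (J1 +>\<^bsub>deg1 R\<^esub> x) = J0 +>\<^bsub>deg0 R\<^esub> dd R x"
proof -
  assume x: "x \<in> carrier (deg1 R)"
  obtain k where k: "k \<in> J1" "(SOME s. s \<in> J1 +>\<^bsub>deg1 R\<^esub> x) = k \<oplus>\<^bsub>deg1 R\<^esub> x" using some1[OF x] by blast
  have kc: "k \<in> carrier (deg1 R)" using k(1) by simp
  show ?thesis using k x kc dJ1[OF k(1)] dgringD(3,4)[OF dgr] by (simp add: Q_simps cos0_eq)
qed

end
context dgq begin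

abbreviation "Q \<equiv> dg_quot R (J0,J1)"

lemma Q1_ab: "abelian_group (deg1 Q)"
proof (rule abelian_groupI, simp_all only: Q_simps)
  fix A B assume "A \<in> a_rcosets\<^bsub>deg1 R\<^esub> J1" "B \<in> a_rcosets\<^bsub>deg1 R\<^esub> J1"
  then obtain x y where "x \<in> carrier (deg1 R)" "y \<in> carrier (deg1 R)" "A = J1 +>\<^bsub>deg1 R\<^esub> x" "B = J1 +>\<^bsub>deg1 R\<^esub> y"
    using carr1 by metis
  thus "A <+>\<^bsub>deg1 R\<^esub> B \<in> a_rcosets\<^bsub>deg1 R\<^esub> J1" by (simp add: q_add1 carr1I)
next
  show "J1 \<in> a_rcosets\<^bsub>deg1 R\<^esub> J1" using carr1I[of "\<zero>\<^bsub>deg1 R\<^esub>"] q_zero1 by simp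
next
  fix A B C assume "A \<in> a_rcosets\<^bsub>deg1 R\<^esub> J1" "B \<in> a_rcosets\<^bsub>deg1 R\<^esub> J1" "C \<in> a_rcosets\<^bsub>deg1 R\<^esub> J1"
  then obtain x y z where "x \<in> carrier (deg1 R)" "y \<in> carrier (deg1 R)" "z \<in> carrier (deg1 R)"
     "A = J1 +>\<^bsub>deg1 R\<^esub> x" "B = J1 +>\<^bsub>deg1 R\<^esub> y" "C = J1 +>\<^bsub>deg1 R\<^esub> z"
    using carr1 by metis
  thus "A <+>\<^bsub>deg1 R\<^esub> B <+>\<^bsub>deg1 R\<^esub> C = A <+>\<^bsub>deg1 R\<^esub> (B <+>\<^bsub>deg1 R\<^esub> C)"
    by (simp add: q_add1 M.M.a_ac)
next
  fix A B assume "A \<in> a_rcosets\<^bsub>deg1 R\<^esub> J1" "B \<in> a_rcosets\<^bsub>deg1 R\<^esub> J1"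
  then obtain x y where "x \<in> carrier (deg1 R)" "y \<in> carrier (deg1 R)" "A = J1 +>\<^bsub>deg1 R\<^esub> x" "B = J1 +>\<^bsub>deg1 R\<^esub> y"
    using carr1 by metis
  thus "A <+>\<^bsub>deg1 R\<^esub> B = B <+>\<^bsub>deg1 R\<^esub> A" by (simp add: q_add1 M.M.a_ac)
next
  fix A assume "A \<in> a_rcosets\<^bsub>deg1 R\<^esub> J1"
  then obtain x where "x \<in> carrier (deg1 R)" "A = J1 +>\<^bsub>deg1 R\<^esub> x"
    using carr1 by metis
  thus "J1 <+>\<^bsub>deg1 R\<^esub> A = A" using q_zero1 by (metis q_add1 M.M.zero_closed M.M.l_zero)
next
  fix A assume "A \<in> a_rcosets\<^bsub>deg1 R\<^esub> J1"
  then obtain x where x: "x \<in> carrier (deg1 R)" "A = J1 +>\<^bsub>deg1 R\<^esub> x"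
    using carr1 by metis
  show "\<exists>B\<in>a_rcosets\<^bsub>deg1 R\<^esub> J1. B <+>\<^bsub>deg1 R\<^esub> A = J1"
    apply (rule bexI[of _ "J1 +>\<^bsub>deg1 R\<^esub> (\<ominus>\<^bsub>deg1 R\<^esub> x)"])
    using x q_zero1 q_add1 carr1I by (metis M.M.a_inv_closed M.M.l_neg)+
qed

lemma Q_module: "module (deg0 Q) (deg1 Q)"
proof (rule moduleI)
  show "cring (deg0 Q)" by (simp add: Q_simps I0.quotient_is_cring M.R.is_cring)
  show "abelian_group (deg1 Q)" by (rule Q1_ab)
next
  fix a A assume "a \<in> carrier (deg0 Q)" "A \<in> carrier (deg1 Q)"
  then obtain r x where "r \<in> carrier (deg0 R)" "x \<in> carrier (deg1 R)" "a = J0 +>\<^bsub>deg0 R\<^esub> r" "A = J1 +>\<^bsub>deg1 R\<^esub> x"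
    using carr0 carr1 by (metis Q_simps(1,2))
  thus "a \<odot>\<^bsub>deg1 Q\<^esub> A \<in> carrier (deg1 Q)" by (simp add: q_smult Q_simps(2) carr1I)
next
  fix a b A assume "a \<in> carrier (deg0 Q)" "b \<in> carrier (deg0 Q)" "A \<in> carrier (deg1 Q)"
  then obtain r s x where "r \<in> carrier (deg0 R)" "s \<in> carrier (deg0 R)" "x \<in> carrier (deg1 R)"
    "a = J0 +>\<^bsub>deg0 R\<^esub> r" "b = J0 +>\<^bsub>deg0 R\<^esub> s" "A = J1 +>\<^bsub>deg1 R\<^esub> x"
    using carr0 carr1 by (metis Q_simps(1,2))
  thus "(a \<oplus>\<^bsub>deg0 Q\<^esub> b) \<odot>\<^bsub>deg1 Q\<^esub> A = a \<odot>\<^bsub>deg1 Q\<^esub> A \<oplus>\<^bsub>deg1 Q\<^esub> b \<odot>\<^bsub>deg1 Q\<^esub> A"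
    by (simp add: q_smult Q_simps(1-4) q_add0 q_add1 M.smult_l_distr)
  show "(a \<otimes>\<^bsub>deg0 Q\<^esub> b) \<odot>\<^bsub>deg1 Q\<^esub> A = a \<odot>\<^bsub>deg1 Q\<^esub> (b \<odot>\<^bsub>deg1 Q\<^esub> A)"
    using \<open>r \<in> _\<close> \<open>s \<in> _\<close> \<open>x \<in> _\<close> \<open>a = _\<close> \<open>b = _\<close> \<open>A = _\<close>
    by (simp add: q_smult Q_simps(1-4) q_mult0 M.smult_assoc1)
next
  fix a A B assume "a \<in> carrier (deg0 Q)" "A \<in> carrier (deg1 Q)" "B \<in> carrier (deg1 Q)"
  then obtain r x y where "r \<in> carrier (deg0 R)" "x \<in> carrier (deg1 R)" "y \<in> carrier (deg1 R)"
    "a = J0 +>\<^bsub>deg0 R\<^esub> r" "A = J1 +>\<^bsub>deg1 R\<^esub> x" "B = J1 +>\<^bsub>deg1 R\<^esub> y"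
    using carr0 carr1 by (metis Q_simps(1,2))
  thus "a \<odot>\<^bsub>deg1 Q\<^esub> (A \<oplus>\<^bsub>deg1 Q\<^esub> B) = a \<odot>\<^bsub>deg1 Q\<^esub> A \<oplus>\<^bsub>deg1 Q\<^esub> a \<odot>\<^bsub>deg1 Q\<^esub> B"
    by (simp add: q_smult Q_simps(1-4) q_add1 M.smult_r_distr)
next
  fix A assume "A \<in> carrier (deg1 Q)"
  then obtain x where "x \<in> carrier (deg1 R)" "A = J1 +>\<^bsub>deg1 R\<^esub> x"
    using carr1 by (metis Q_simps(2))
  thus "\<one>\<^bsub>deg0 Q\<^esub> \<odot>\<^bsub>deg1 Q\<^esub> A = A"
    by (simp add: q_smult Q_simps(1-4) q_one0)
qed


lemma Q_dgring: "dgring Q"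
  unfolding dgring_def
proof (intro conjI ballI)
  show "cring (deg0 Q)" by (simp add: Q_simps I0.quotient_is_cring M.R.is_cring)
  show "module (deg0 Q) (deg1 Q)" by (rule Q_module)
  show "dd Q \<in> carrier (deg1 Q) \<rightarrow> carrier (deg0 Q)"
  proof
    fix B assume "B \<in> carrier (deg1 Q)"
    then obtain x where "x \<in> carrier (deg1 R)" "B = J1 +>\<^bsub>deg1 R\<^esub> x" using carr1 by (metis Q_simps(2))
    thus "dd Q B \<in> carrier (deg0 Q)" using dgringD(3)[OF dgr] by (simp add: q_dd Q_simps(1) carr0I)
  qed
next
  fix A B assume "A \<in> carrier (deg1 Q)" "B \<in> carrier (deg1 Q)"
  then obtain x y where xy: "x \<in> carrier (deg1 R)" "y \<in> carrier (deg1 R)" "A = J1 +>\<^bsub>deg1 R\<^esub> x" "B = J1 +>\<^bsub>deg1 R\<^esub> y"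
    using carr1 by (metis Q_simps(2))
  show "dd Q (A \<oplus>\<^bsub>deg1 Q\<^esub> B) = dd Q A \<oplus>\<^bsub>deg0 Q\<^esub> dd Q B"
    using xy dgringD(3,4)[OF dgr] by (simp add: Q_simps(1-4) q_add1 q_dd q_add0)
  show "dd Q A \<odot>\<^bsub>deg1 Q\<^esub> B = dd Q B \<odot>\<^bsub>deg1 Q\<^esub> A"
    using xy dgringD(3,6)[OF dgr] by (simp add: q_dd q_smult)
next
  fix a B assume "a \<in> carrier (deg0 Q)" "B \<in> carrier (deg1 Q)"
  then obtain r y where xy: "r \<in> carrier (deg0 R)" "y \<in> carrier (deg1 R)" "a = J0 +>\<^bsub>deg0 R\<^esub> r" "B = J1 +>\<^bsub>deg1 R\<^esub> y"
    using carr0 carr1 by (metis Q_simps(1,2))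
  show "dd Q (a \<odot>\<^bsub>deg1 Q\<^esub> B) = a \<otimes>\<^bsub>deg0 Q\<^esub> dd Q B"
    using xy dgringD(3,5)[OF dgr] by (simp add: Q_simps(1) q_smult q_dd q_mult0)
qed

lemma quot_hom: "dg_hom R Q (dg_quot_map R (J0,J1))"
  unfolding dg_hom_def dg_quot_map_def
proof (simp only: fst_conv snd_conv, intro conjI ballI)
  show "(\<lambda>r. J0 +>\<^bsub>deg0 R\<^esub> r) \<in> ring_hom (deg0 R) (deg0 Q)"
    using I0.rcos_ring_hom by (simp add: Q_simps(1))
  show "(\<lambda>x. J1 +>\<^bsub>deg1 R\<^esub> x) \<in> carrier (deg1 R) \<rightarrow> carrier (deg1 Q)"
    by (auto simp: Q_simps(2) carr1I)
next
  fix x y assume "x \<in> carrier (deg1 R)" "y \<in> carrier (deg1 R)"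
  thus "J1 +>\<^bsub>deg1 R\<^esub> (x \<oplus>\<^bsub>deg1 R\<^esub> y) = (J1 +>\<^bsub>deg1 R\<^esub> x) \<oplus>\<^bsub>deg1 Q\<^esub> (J1 +>\<^bsub>deg1 R\<^esub> y)"
    by (simp add: Q_simps(4) q_add1)
next
  fix r x assume "r \<in> carrier (deg0 R)" "x \<in> carrier (deg1 R)"
  thus "J1 +>\<^bsub>deg1 R\<^esub> (r \<odot>\<^bsub>deg1 R\<^esub> x) = (J0 +>\<^bsub>deg0 R\<^esub> r) \<odot>\<^bsub>deg1 Q\<^esub> (J1 +>\<^bsub>deg1 R\<^esub> x)"
    by (simp add: q_smult)
next
  fix x assume "x \<in> carrier (deg1 R)"
  thus "dd Q (J1 +>\<^bsub>deg1 R\<^esub> x) = J0 +>\<^bsub>deg0 R\<^esub> dd R x" by (simp add: q_dd)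
qed

context
  fixes S :: "('c,'e) dgr" and h
  assumes S: "dgring S" and h: "dg_hom R S h"
    and k0: "\<And>a. a \<in> J0 \<Longrightarrow> fst h a = \<zero>\<^bsub>deg0 S\<^esub>"
    and k1: "\<And>x. x \<in> J1 \<Longrightarrow> snd h x = \<zero>\<^bsub>deg1 S\<^esub>"
begin

interpretation S: module "deg0 S" "deg1 S" by (rule dgringD(2)[OF S])
interpretation H: ring_hom_cring "deg0 R" "deg0 S" "fst h" by (rule hom0_cring[OF dgr S h])

lemma ind0: "r \<in> carrier (deg0 R) \<Longrightarrow> fst (dg_induced h) (J0 +>\<^bsub>deg0 R\<^esub> r) = fst h r"
proof -
  assume r: "r \<in> carrier (deg0 R)"
  obtain i where i: "i \<in> J0" "(SOME s. s \<in> J0 +>\<^bsub>deg0 R\<^esub> r) = i \<oplus>\<^bsub>deg0 R\<^esub> r" using some0[OF r] by blast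
  have ic: "i \<in> carrier (deg0 R)" using i(1) by simp
  show ?thesis using i ic r k0[OF i(1)] by (simp add: dg_induced_def)
qed

lemma ind1: "x \<in> carrier (deg1 R) \<Longrightarrow> snd (dg_induced h) (J1 +>\<^bsub>deg1 R\<^esub> x) = snd h x"
proof -
  assume x: "x \<in> carrier (deg1 R)"
  obtain k where k: "k \<in> J1" "(SOME s. s \<in> J1 +>\<^bsub>deg1 R\<^esub> x) = k \<oplus>\<^bsub>deg1 R\<^esub> x" using some1[OF x] by blast
  have kc: "k \<in> carrier (deg1 R)" using k(1) by simp
  show ?thesis using k kc x k1[OF k(1)] dg_homD(2,3)[OF h] by (simp add: dg_induced_def)
qed

lemma ind_hom: "dg_hom Q S (dg_induced h)"
  unfolding dg_hom_def
proof (intro conjI ballI)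
  show "fst (dg_induced h) \<in> ring_hom (deg0 Q) (deg0 S)"
  proof (rule ring_hom_memI)
    fix a assume "a \<in> carrier (deg0 Q)"
    then obtain r where "r \<in> carrier (deg0 R)" "a = J0 +>\<^bsub>deg0 R\<^esub> r" using carr0 by (metis Q_simps(1))
    thus "fst (dg_induced h) a \<in> carrier (deg0 S)" by (simp add: ind0)
  next
    fix a b assume "a \<in> carrier (deg0 Q)" "b \<in> carrier (deg0 Q)"
    then obtain r s where rs: "r \<in> carrier (deg0 R)" "s \<in> carrier (deg0 R)" "a = J0 +>\<^bsub>deg0 R\<^esub> r" "b = J0 +>\<^bsub>deg0 R\<^esub> s"
      using carr0 by (metis Q_simps(1))
    show "fst (dg_induced h) (a \<otimes>\<^bsub>deg0 Q\<^esub> b) = fst (dg_induced h) a \<otimes>\<^bsub>deg0 S\<^esub> fst (dg_induced h) b"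
      using rs by (simp add: Q_simps(1) q_mult0 ind0)
    show "fst (dg_induced h) (a \<oplus>\<^bsub>deg0 Q\<^esub> b) = fst (dg_induced h) a \<oplus>\<^bsub>deg0 S\<^esub> fst (dg_induced h) b"
      using rs by (simp add: Q_simps(1) q_add0 ind0)
  next
    show "fst (dg_induced h) \<one>\<^bsub>deg0 Q\<^esub> = \<one>\<^bsub>deg0 S\<^esub>"
      by (simp add: Q_simps(1) q_one0 ind0)
  qed
  show "snd (dg_induced h) \<in> carrier (deg1 Q) \<rightarrow> carrier (deg1 S)"
  proof
    fix B assume "B \<in> carrier (deg1 Q)"
    then obtain x where "x \<in> carrier (deg1 R)" "B = J1 +>\<^bsub>deg1 R\<^esub> x" using carr1 by (metis Q_simps(2))
    thus "snd (dg_induced h) B \<in> carrier (deg1 S)" using dg_homD(2)[OF h] by (simp add: ind1)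
  qed
next
  fix A B assume "A \<in> carrier (deg1 Q)" "B \<in> carrier (deg1 Q)"
  then obtain x y where xy: "x \<in> carrier (deg1 R)" "y \<in> carrier (deg1 R)" "A = J1 +>\<^bsub>deg1 R\<^esub> x" "B = J1 +>\<^bsub>deg1 R\<^esub> y"
    using carr1 by (metis Q_simps(2))
  show "snd (dg_induced h) (A \<oplus>\<^bsub>deg1 Q\<^esub> B) = snd (dg_induced h) A \<oplus>\<^bsub>deg1 S\<^esub> snd (dg_induced h) B"
    using xy dg_homD(3)[OF h] by (simp add: Q_simps(4) q_add1 ind1)
next
  fix a B assume "a \<in> carrier (deg0 Q)" "B \<in> carrier (deg1 Q)"
  then obtain r y where xy: "r \<in> carrier (deg0 R)" "y \<in> carrier (deg1 R)" "a = J0 +>\<^bsub>deg0 R\<^esub> r" "B = J1 +>\<^bsub>deg1 R\<^esub> y"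
    using carr0 carr1 by (metis Q_simps(1,2))
  show "snd (dg_induced h) (a \<odot>\<^bsub>deg1 Q\<^esub> B) = fst (dg_induced h) a \<odot>\<^bsub>deg1 S\<^esub> snd (dg_induced h) B"
    using xy dg_homD(4)[OF h] by (simp add: q_smult ind1 ind0)
next
  fix B assume "B \<in> carrier (deg1 Q)"
  then obtain x where xy: "x \<in> carrier (deg1 R)" "B = J1 +>\<^bsub>deg1 R\<^esub> x" using carr1 by (metis Q_simps(2))
  show "dd S (snd (dg_induced h) B) = fst (dg_induced h) (dd Q B)"
    using xy dg_homD(5)[OF h] dgringD(3)[OF dgr] by (simp add: q_dd ind1 ind0)
qed

end

end

lemma add_subgroupI:
  fixes G (structure)
  assumes "abelian_group G" "H \<subseteq> carrier G" "\<zero> \<in> H"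
    "\<And>a. a \<in> H \<Longrightarrow> \<ominus> a \<in> H" "\<And>a b. a \<in> H \<Longrightarrow> b \<in> H \<Longrightarrow> a \<oplus> b \<in> H"
  shows "subgroup H (add_monoid G)"
proof -
  interpret abelian_group G by fact
  show ?thesis
    apply (rule add.subgroupI)
    using assms by (auto simp: a_inv_def[symmetric])
qed


theorem lemma4p3p3:
  fixes R1 :: "('a, 'b) dgr" and R12 :: "('c, 'e) dgr" and R2 :: "('g, 'i) dgr"
    and f :: "('c \<Rightarrow> 'a) \<times> ('e \<Rightarrow> 'b)" and g :: "('c \<Rightarrow> 'g) \<times> ('e \<Rightarrow> 'i)"
  assumes wa: "weakly_admissible R1 R12 R2 f g"
  defines "K \<equiv> {x \<in> carrier (deg1 R12). snd f x = \<zero>\<^bsub>deg1 R1\<^esub> \<and> snd g x = \<zero>\<^bsub>deg1 R2\<^esub>}"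
  defines "I \<equiv> dg_ideal_gen R12 K"
  shows "dg_surj R12 R1 f \<and>
         dg_acyclic R12 (dg_kernel R12 R1 f) \<and>
         dg_acyclic R12 I \<and>
         is_Adm R1 R2 R12 f g (dg_quot R12 I) (dg_induced f) (dg_induced g)
           (dg_quot_map R12 I) TYPE(('m, 'n) dgr)"
proof -
  have R1: "dgring R1" and R12: "dgring R12" and R2: "dgring R2"
    and hf: "dg_hom R12 R1 f" and hg: "dg_hom R12 R2 g" and qf: "quasi_iso R12 R1 f"
    and wsurj: "(\<lambda>x. (snd f x, snd g x)) ` carrier (deg1 R12) = carrier (deg1 R1) \<times> carrier (deg1 R2)"
    using wa by (auto simp: weakly_admissible_def corr_def)
  have bijf: "bij_betw (snd f) (dg_cycles R12) (dg_cycles R1)"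
    and cok1: "\<And>s. s \<in> carrier (deg0 R1) \<Longrightarrow> \<exists>r\<in>carrier (deg0 R12). \<exists>y\<in>carrier (deg1 R1).
        s = fst f r \<oplus>\<^bsub>deg0 R1\<^esub> dd R1 y"
    and cok2: "\<And>r. r \<in> carrier (deg0 R12) \<Longrightarrow> fst f r \<in> dd R1 ` carrier (deg1 R1) \<Longrightarrow>
        r \<in> dd R12 ` carrier (deg1 R12)"
    using qf by (auto simp: quasi_iso_def)
  interpret M12: module "deg0 R12" "deg1 R12" by (rule dgringD(2)[OF R12])
  interpret M1: module "deg0 R1" "deg1 R1" by (rule dgringD(2)[OF R1])
  interpret M2: module "deg0 R2" "deg1 R2" by (rule dgringD(2)[OF R2])
  interpret HF: ring_hom_cring "deg0 R12" "deg0 R1" "fst f" by (rule hom0_cring[OF R12 R1 hf])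
  interpret HG: ring_hom_cring "deg0 R12" "deg0 R2" "fst g" by (rule hom0_cring[OF R12 R2 hg])
  note d12 = dgringD(3-6)[OF R12]
  note f1 = dg_homD(2-5)[OF hf] and g1 = dg_homD(2-5)[OF hg]
  have f0z: "snd f \<zero>\<^bsub>deg1 R12\<^esub> = \<zero>\<^bsub>deg1 R1\<^esub>" by (rule hom1_zero[OF R12 R1 hf])
  have g0z: "snd g \<zero>\<^bsub>deg1 R12\<^esub> = \<zero>\<^bsub>deg1 R2\<^esub>" by (rule hom1_zero[OF R12 R2 hg])
  have dz12: "dd R12 \<zero>\<^bsub>deg1 R12\<^esub> = \<zero>\<^bsub>deg0 R12\<^esub>" by (rule dd_zero[OF R12])
  have dz1: "dd R1 \<zero>\<^bsub>deg1 R1\<^esub> = \<zero>\<^bsub>deg0 R1\<^esub>" by (rule dd_zero[OF R1])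
  have dz2: "dd R2 \<zero>\<^bsub>deg1 R2\<^esub> = \<zero>\<^bsub>deg0 R2\<^esub>" by (rule dd_zero[OF R2])
  have pre: "\<exists>x\<in>carrier (deg1 R12). snd f x = a \<and> snd g x = b"
    if "a \<in> carrier (deg1 R1)" "b \<in> carrier (deg1 R2)" for a b
  proof -
    have "(a, b) \<in> (\<lambda>x. (snd f x, snd g x)) ` carrier (deg1 R12)" using wsurj that by simp
    thus ?thesis by force
  qed
  have injf: "inj_on (snd f) (dg_cycles R12)" using bijf by (simp add: bij_betw_def)
  have imf: "snd f ` dg_cycles R12 = dg_cycles R1" using bijf by (simp add: bij_betw_def)
  
  have surj: "dg_surj R12 R1 f"
    unfolding dg_surj_def
  proof
    show "fst f ` carrier (deg0 R12) = carrier (deg0 R1)"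
    proof
      show "fst f ` carrier (deg0 R12) \<subseteq> carrier (deg0 R1)" by auto
      show "carrier (deg0 R1) \<subseteq> fst f ` carrier (deg0 R12)"
      proof
        fix s assume s: "s \<in> carrier (deg0 R1)"
        obtain r y where ry: "r \<in> carrier (deg0 R12)" "y \<in> carrier (deg1 R1)"
          "s = fst f r \<oplus>\<^bsub>deg0 R1\<^esub> dd R1 y" using cok1[OF s] by blast
        obtain x where x: "x \<in> carrier (deg1 R12)" "snd f x = y"
          using pre[OF ry(2) M2.M.zero_closed] by blast
        have "s = fst f (r \<oplus>\<^bsub>deg0 R12\<^esub> dd R12 x)" using ry x f1(4)[OF x(1)] d12(1)[OF x(1)] by simp
        thus "s \<in> fst f ` carrier (deg0 R12)" using ry(1) x(1) d12(1) by blast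
      qed
    qed
    show "snd f ` carrier (deg1 R12) = carrier (deg1 R1)"
    proof
      show "snd f ` carrier (deg1 R12) \<subseteq> carrier (deg1 R1)" using f1(1) by auto
      show "carrier (deg1 R1) \<subseteq> snd f ` carrier (deg1 R12)"
        using pre[OF _ M2.M.zero_closed] by force
    qed
  qed
  
  have cyc0: "x = \<zero>\<^bsub>deg1 R12\<^esub>" if "x \<in> carrier (deg1 R12)" "snd f x = \<zero>\<^bsub>deg1 R1\<^esub>"
     "dd R12 x = \<zero>\<^bsub>deg0 R12\<^esub>" for x
  proof -
    have "x \<in> dg_cycles R12" "\<zero>\<^bsub>deg1 R12\<^esub> \<in> dg_cycles R12" using that dz12 by (auto simp: dg_cycles_def)
    thus ?thesis using injf that(2) f0z by (metis inj_on_def)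
  qed
  have ker_acyc: "dg_acyclic R12 (dg_kernel R12 R1 f)"
    unfolding dg_acyclic_def dg_kernel_def fst_conv snd_conv
  proof
    show "{x \<in> {x \<in> carrier (deg1 R12). snd f x = \<zero>\<^bsub>deg1 R1\<^esub>}. dd R12 x = \<zero>\<^bsub>deg0 R12\<^esub>} = {\<zero>\<^bsub>deg1 R12\<^esub>}"
      using cyc0 f0z dz12 by auto
    show "{r \<in> carrier (deg0 R12). fst f r = \<zero>\<^bsub>deg0 R1\<^esub>} \<subseteq> dd R12 ` {x \<in> carrier (deg1 R12). snd f x = \<zero>\<^bsub>deg1 R1\<^esub>}"
    proof
      fix r assume "r \<in> {r \<in> carrier (deg0 R12). fst f r = \<zero>\<^bsub>deg0 R1\<^esub>}"
      hence r: "r \<in> carrier (deg0 R12)" "fst f r = \<zero>\<^bsub>deg0 R1\<^esub>" by auto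
      have "fst f r \<in> dd R1 ` carrier (deg1 R1)" using r(2) dz1 M1.M.zero_closed by (metis image_eqI)
      then obtain y where y: "y \<in> carrier (deg1 R12)" "r = dd R12 y" using cok2[OF r(1)] by blast
      have "snd f y \<in> dg_cycles R1" using y r f1 by (auto simp: dg_cycles_def)
      then obtain z where z: "z \<in> dg_cycles R12" "snd f z = snd f y" using imf by (metis imageE)
      have zc: "z \<in> carrier (deg1 R12)" "dd R12 z = \<zero>\<^bsub>deg0 R12\<^esub>" using z(1) by (auto simp: dg_cycles_def)
      let ?x = "y \<oplus>\<^bsub>deg1 R12\<^esub> \<ominus>\<^bsub>deg1 R12\<^esub> z"
      have "?x \<in> carrier (deg1 R12)" using y zc by simp
      moreover have "snd f ?x = \<zero>\<^bsub>deg1 R1\<^esub>"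
        using y zc z(2) f1(2) hom1_neg[OF R12 R1 hf zc(1)] f1(1)[OF y(1)] by (simp add: M1.M.r_neg)
      moreover have "dd R12 ?x = r"
        using y zc d12(2) dd_neg[OF R12 zc(1)] d12(1) by simp
      ultimately show "r \<in> dd R12 ` {x \<in> carrier (deg1 R12). snd f x = \<zero>\<^bsub>deg1 R1\<^esub>}" by force
    qed
  qed
  
  have Kc: "K \<subseteq> carrier (deg1 R12)" by (auto simp: K_def)
  have K0: "\<zero>\<^bsub>deg1 R12\<^esub> \<in> K" using f0z g0z by (simp add: K_def)
  have Kadd: "x \<oplus>\<^bsub>deg1 R12\<^esub> y \<in> K" if "x \<in> K" "y \<in> K" for x y
    using that f1(2) g1(2) by (simp add: K_def)
  have Kneg: "\<ominus>\<^bsub>deg1 R12\<^esub> x \<in> K" if "x \<in> K" for x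
    using that hom1_neg[OF R12 R1 hf] hom1_neg[OF R12 R2 hg] by (simp add: K_def)
  have Ksm: "r \<odot>\<^bsub>deg1 R12\<^esub> x \<in> K" if "r \<in> carrier (deg0 R12)" "x \<in> K" for r x
    using that f1(3) g1(3) by (simp add: K_def)
  have dK: "fst f a = \<zero>\<^bsub>deg0 R1\<^esub> \<and> fst g a = \<zero>\<^bsub>deg0 R2\<^esub>" if "a \<in> dd R12 ` K" for a
    using that by (auto simp: K_def f1(4)[symmetric] g1(4)[symmetric] dz1 dz2)
  have dgi: "dg_ideal R12 (dd R12 ` K, K)"
    unfolding dg_ideal_def fst_conv snd_conv
  proof (intro conjI ballI)
    have sgK: "subgroup K (add_monoid (deg1 R12))"
      by (rule add_subgroupI[OF M12.M.abelian_group_axioms Kc K0 Kneg Kadd])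
    show "subgroup K (add_monoid (deg1 R12))" by (rule sgK)
    show "ideal (dd R12 ` K) (deg0 R12)"
    proof (rule idealI[OF M12.R.ring_axioms])
      show "subgroup (dd R12 ` K) (add_monoid (deg0 R12))"
      proof (rule add_subgroupI[OF M12.R.abelian_group_axioms])
        show "dd R12 ` K \<subseteq> carrier (deg0 R12)" using Kc d12(1) by auto
        show "\<zero>\<^bsub>deg0 R12\<^esub> \<in> dd R12 ` K" using K0 dz12 by (metis image_eqI)
        show "\<ominus>\<^bsub>deg0 R12\<^esub> a \<in> dd R12 ` K" if "a \<in> dd R12 ` K" for a
          using that Kneg dd_neg[OF R12] Kc by (smt (verit) image_iff subsetD)
        show "a \<oplus>\<^bsub>deg0 R12\<^esub> b \<in> dd R12 ` K" if "a \<in> dd R12 ` K" "b \<in> dd R12 ` K" for a b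
          using that Kadd d12(2) Kc by (smt (verit) image_iff subsetD)
      qed
      have lc: "x \<otimes>\<^bsub>deg0 R12\<^esub> a \<in> dd R12 ` K" if H: "a \<in> dd R12 ` K" "x \<in> carrier (deg0 R12)" for a x
      proof -
        obtain k where k: "k \<in> K" "a = dd R12 k" using H by blast
        have "x \<otimes>\<^bsub>deg0 R12\<^esub> a = dd R12 (x \<odot>\<^bsub>deg1 R12\<^esub> k)" using k Kc H d12(3) by auto
        thus ?thesis using Ksm[OF H(2) k(1)] by simp
      qed
      show "x \<otimes>\<^bsub>deg0 R12\<^esub> a \<in> dd R12 ` K" if "a \<in> dd R12 ` K" "x \<in> carrier (deg0 R12)" for a x
        using lc that .
      show "a \<otimes>\<^bsub>deg0 R12\<^esub> x \<in> dd R12 ` K" if "a \<in> dd R12 ` K" "x \<in> carrier (deg0 R12)" for a x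
      proof -
        have "a \<in> carrier (deg0 R12)" using that Kc d12(1) by auto
        thus ?thesis using lc[OF that] that(2) by (simp add: M12.R.m_comm)
      qed
    qed
    show "r \<odot>\<^bsub>deg1 R12\<^esub> x \<in> K" if "r \<in> carrier (deg0 R12)" "x \<in> K" for r x using Ksm that .
    show "a \<odot>\<^bsub>deg1 R12\<^esub> x \<in> K" if H: "a \<in> dd R12 ` K" "x \<in> carrier (deg1 R12)" for a x
    proof -
      obtain k where k: "k \<in> K" "a = dd R12 k" using H by blast
      have "a \<odot>\<^bsub>deg1 R12\<^esub> x = dd R12 x \<odot>\<^bsub>deg1 R12\<^esub> k" using k Kc H d12(4) by auto
      thus ?thesis using Ksm[OF d12(1)[OF H(2)] k(1)] by simp
    qed
  qed simp
  have Ieq: "I = (dd R12 ` K, K)"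
  proof -
    have lo: "dd R12 ` K \<subseteq> fst J" if "dg_ideal R12 J" "K \<subseteq> snd J" for J
    proof -
      have "dd R12 ` snd J \<subseteq> fst J" using that(1) by (simp add: dg_ideal_def)
      thus ?thesis using that(2) by (meson image_mono subset_trans)
    qed
    have m1: "dd R12 ` K \<in> {fst J | J. dg_ideal R12 J \<and> K \<subseteq> snd J}"
      using dgi by (intro CollectI exI[of _ "(dd R12 ` K, K)"]) simp
    have m2: "K \<in> {snd J | J. dg_ideal R12 J \<and> K \<subseteq> snd J}"
      using dgi by (intro CollectI exI[of _ "(dd R12 ` K, K)"]) simp
    have "\<Inter>{fst J | J. dg_ideal R12 J \<and> K \<subseteq> snd J} = dd R12 ` K"
    proof (rule antisym)
      show "\<Inter>{fst J | J. dg_ideal R12 J \<and> K \<subseteq> snd J} \<subseteq> dd R12 ` K" using m1 by (rule Inter_lower)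
      show "dd R12 ` K \<subseteq> \<Inter>{fst J | J. dg_ideal R12 J \<and> K \<subseteq> snd J}"
      proof (rule Inter_greatest)
        fix XX assume "XX \<in> {fst J | J. dg_ideal R12 J \<and> K \<subseteq> snd J}"
        then obtain J where "XX = fst J" "dg_ideal R12 J" "K \<subseteq> snd J" by blast
        thus "dd R12 ` K \<subseteq> XX" using lo by simp
      qed
    qed
    moreover have "\<Inter>{snd J | J. dg_ideal R12 J \<and> K \<subseteq> snd J} = K"
    proof (rule antisym)
      show "\<Inter>{snd J | J. dg_ideal R12 J \<and> K \<subseteq> snd J} \<subseteq> K" using m2 by (rule Inter_lower)
      show "K \<subseteq> \<Inter>{snd J | J. dg_ideal R12 J \<and> K \<subseteq> snd J}"
      proof (rule Inter_greatest)
        fix XX assume "XX \<in> {snd J | J. dg_ideal R12 J \<and> K \<subseteq> snd J}"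
        thus "K \<subseteq> XX" by blast
      qed
    qed
    ultimately show ?thesis by (simp add: I_def dg_ideal_gen_def)
  qed
  have I_acyc: "dg_acyclic R12 I"
    unfolding Ieq dg_acyclic_def fst_conv snd_conv
  proof
    show "{x \<in> K. dd R12 x = \<zero>\<^bsub>deg0 R12\<^esub>} = {\<zero>\<^bsub>deg1 R12\<^esub>}"
      using cyc0 K0 dz12 unfolding K_def by blast
  qed simp
  
  have fk0: "fst f a = \<zero>\<^bsub>deg0 R1\<^esub>" if "a \<in> dd R12 ` K" for a using dK[OF that] by blast
  have gk0: "fst g a = \<zero>\<^bsub>deg0 R2\<^esub>" if "a \<in> dd R12 ` K" for a using dK[OF that] by blast
  have fk1: "snd f x = \<zero>\<^bsub>deg1 R1\<^esub>" if "x \<in> K" for x using that by (simp add: K_def)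
  have gk1: "snd g x = \<zero>\<^bsub>deg1 R2\<^esub>" if "x \<in> K" for x using that by (simp add: K_def)
  interpret Q: dgq R12 "dd R12 ` K" K by (rule dgq.intro[OF R12 dgi])
  have hf': "dg_hom (dg_quot R12 (dd R12 ` K, K)) R1 (dg_induced f)"
    by (rule Q.ind_hom[OF R1 hf]) (auto intro: fk0 fk1)
  have hg': "dg_hom (dg_quot R12 (dd R12 ` K, K)) R2 (dg_induced g)"
    by (rule Q.ind_hom[OF R2 hg]) (auto intro: gk0 gk1)
  have f0': "\<And>r. r \<in> carrier (deg0 R12) \<Longrightarrow> fst (dg_induced f) (dd R12 ` K +>\<^bsub>deg0 R12\<^esub> r) = fst f r"
    by (rule Q.ind0[OF R1 hf]) (auto intro: fk0 fk1)
  have g0': "\<And>r. r \<in> carrier (deg0 R12) \<Longrightarrow> fst (dg_induced g) (dd R12 ` K +>\<^bsub>deg0 R12\<^esub> r) = fst g r"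
    by (rule Q.ind0[OF R2 hg]) (auto intro: gk0 gk1)
  have f1': "\<And>x. x \<in> carrier (deg1 R12) \<Longrightarrow> snd (dg_induced f) (K +>\<^bsub>deg1 R12\<^esub> x) = snd f x"
    by (rule Q.ind1[OF R1 hf]) (auto intro: fk0 fk1)
  have g1': "\<And>x. x \<in> carrier (deg1 R12) \<Longrightarrow> snd (dg_induced g) (K +>\<^bsub>deg1 R12\<^esub> x) = snd g x"
    by (rule Q.ind1[OF R2 hg]) (auto intro: gk0 gk1)
  have J0eq: "dd R12 ` K +>\<^bsub>deg0 R12\<^esub> \<zero>\<^bsub>deg0 R12\<^esub> = dd R12 ` K"
  proof -
    have "\<zero>\<^bsub>deg0 R12 Quot dd R12 ` K\<^esub> = dd R12 ` K" by (simp add: FactRing_def)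
    thus ?thesis using trans[OF Q.q_zero0[symmetric]] by blast
  qed
  have zeroT: "\<zero>\<^bsub>deg0 (dg_quot R12 (dd R12 ` K, K))\<^esub> = dd R12 ` K"
    by (simp add: Q.Q_simps(1) FactRing_def)
  have cycT: "dg_cycles (dg_quot R12 (dd R12 ` K, K)) = (\<lambda>z. K +>\<^bsub>deg1 R12\<^esub> z) ` dg_cycles R12"
  proof
    show "dg_cycles (dg_quot R12 (dd R12 ` K, K)) \<subseteq> (\<lambda>z. K +>\<^bsub>deg1 R12\<^esub> z) ` dg_cycles R12"
    proof
      fix B assume B: "B \<in> dg_cycles (dg_quot R12 (dd R12 ` K, K))"
      then obtain x where x: "x \<in> carrier (deg1 R12)" "B = K +>\<^bsub>deg1 R12\<^esub> x"
        using Q.carr1 by (auto simp: dg_cycles_def Q.Q_simps(2))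
      have "dd R12 ` K +>\<^bsub>deg0 R12\<^esub> dd R12 x = dd R12 ` K"
        using B x zeroT by (simp add: dg_cycles_def Q.q_dd)
      hence "dd R12 x \<in> dd R12 ` K"
        by (rule abelian_group.a_coset_join1[OF Q.ab0 _ d12(1)[OF x(1)] Q.I0.a_subgroup])
      then obtain k where k: "k \<in> K" "dd R12 x = dd R12 k" by blast
      have kc: "k \<in> carrier (deg1 R12)" using k Kc by auto
      let ?z = "\<ominus>\<^bsub>deg1 R12\<^esub> k \<oplus>\<^bsub>deg1 R12\<^esub> x"
      have "?z \<in> dg_cycles R12"
        using kc x k(2) d12(1,2) dd_neg[OF R12 kc] by (simp add: dg_cycles_def M12.R.l_neg)
      moreover have "K +>\<^bsub>deg1 R12\<^esub> ?z = B" using Q.cos1_eq[OF Kneg[OF k(1)] x(1)] x(2) by simp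
      ultimately show "B \<in> (\<lambda>z. K +>\<^bsub>deg1 R12\<^esub> z) ` dg_cycles R12" by blast
    qed
    show "(\<lambda>z. K +>\<^bsub>deg1 R12\<^esub> z) ` dg_cycles R12 \<subseteq> dg_cycles (dg_quot R12 (dd R12 ` K, K))"
    proof
      fix B assume "B \<in> (\<lambda>z. K +>\<^bsub>deg1 R12\<^esub> z) ` dg_cycles R12"
      then obtain z where z: "z \<in> carrier (deg1 R12)" "dd R12 z = \<zero>\<^bsub>deg0 R12\<^esub>" "B = K +>\<^bsub>deg1 R12\<^esub> z"
        by (auto simp: dg_cycles_def)
      thus "B \<in> dg_cycles (dg_quot R12 (dd R12 ` K, K))"
        using zeroT J0eq by (simp add: dg_cycles_def Q.q_dd Q.Q_simps(2) Q.carr1I)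
    qed
  qed
  have cyc12c: "z \<in> carrier (deg1 R12)" if "z \<in> dg_cycles R12" for z
    using that by (simp add: dg_cycles_def)
  have bijT: "bij_betw (snd (dg_induced f)) (dg_cycles (dg_quot R12 (dd R12 ` K, K))) (dg_cycles R1)"
    unfolding bij_betw_def cycT
  proof
    show "inj_on (snd (dg_induced f)) ((\<lambda>z. K +>\<^bsub>deg1 R12\<^esub> z) ` dg_cycles R12)"
    proof (rule inj_onI)
      fix B B' assume "B \<in> (\<lambda>z. K +>\<^bsub>deg1 R12\<^esub> z) ` dg_cycles R12"
        "B' \<in> (\<lambda>z. K +>\<^bsub>deg1 R12\<^esub> z) ` dg_cycles R12"
        and e: "snd (dg_induced f) B = snd (dg_induced f) B'"
      then obtain z z' where z: "z \<in> dg_cycles R12" "z' \<in> dg_cycles R12"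
        "B = K +>\<^bsub>deg1 R12\<^esub> z" "B' = K +>\<^bsub>deg1 R12\<^esub> z'" by blast
      have "snd f z = snd f z'" using e z f1'[OF cyc12c] by simp
      hence "z = z'" by (rule inj_onD[OF injf _ z(1) z(2)])
      thus "B = B'" using z by simp
    qed
    have "snd (dg_induced f) ` (\<lambda>z. K +>\<^bsub>deg1 R12\<^esub> z) ` dg_cycles R12 = snd f ` dg_cycles R12"
      unfolding image_image using f1'[OF cyc12c] by (rule image_cong[OF refl])
    thus "snd (dg_induced f) ` (\<lambda>z. K +>\<^bsub>deg1 R12\<^esub> z) ` dg_cycles R12 = dg_cycles R1"
      using imf by simp
  qed
  have qT: "quasi_iso (dg_quot R12 (dd R12 ` K, K)) R1 (dg_induced f)"
    unfolding quasi_iso_def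
  proof (intro conjI ballI impI)
    show "dg_hom (dg_quot R12 (dd R12 ` K, K)) R1 (dg_induced f)" by (rule hf')
    show "bij_betw (snd (dg_induced f)) (dg_cycles (dg_quot R12 (dd R12 ` K, K))) (dg_cycles R1)" by (rule bijT)
  next
    fix s assume s: "s \<in> carrier (deg0 R1)"
    obtain r y where ry: "r \<in> carrier (deg0 R12)" "y \<in> carrier (deg1 R1)"
      "s = fst f r \<oplus>\<^bsub>deg0 R1\<^esub> dd R1 y" using cok1[OF s] by blast
    show "\<exists>A\<in>carrier (deg0 (dg_quot R12 (dd R12 ` K, K))). \<exists>y\<in>carrier (deg1 R1).
        s = fst (dg_induced f) A \<oplus>\<^bsub>deg0 R1\<^esub> dd R1 y"
    proof -
      have "s = fst (dg_induced f) (dd R12 ` K +>\<^bsub>deg0 R12\<^esub> r) \<oplus>\<^bsub>deg0 R1\<^esub> dd R1 y"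
        using ry f0'[OF ry(1)] by simp
      moreover have "dd R12 ` K +>\<^bsub>deg0 R12\<^esub> r \<in> carrier (deg0 (dg_quot R12 (dd R12 ` K, K)))"
        using Q.carr0I[OF ry(1)] by (simp add: Q.Q_simps(1))
      ultimately show ?thesis using ry(2) by blast
    qed
  next
    fix A assume A: "A \<in> carrier (deg0 (dg_quot R12 (dd R12 ` K, K)))"
      and im: "fst (dg_induced f) A \<in> dd R1 ` carrier (deg1 R1)"
    obtain r where r: "r \<in> carrier (deg0 R12)" "A = dd R12 ` K +>\<^bsub>deg0 R12\<^esub> r"
      using Q.carr0[OF A[unfolded Q.Q_simps(1)]] by blast
    have "r \<in> dd R12 ` carrier (deg1 R12)" using cok2[OF r(1)] im r f0' by simp
    then obtain y where y: "y \<in> carrier (deg1 R12)" "r = dd R12 y" by blast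
    have "A = dd (dg_quot R12 (dd R12 ` K, K)) (K +>\<^bsub>deg1 R12\<^esub> y)" using y r by (simp add: Q.q_dd)
    moreover have "K +>\<^bsub>deg1 R12\<^esub> y \<in> carrier (deg1 (dg_quot R12 (dd R12 ` K, K)))"
      using y by (simp add: Q.Q_simps(2) Q.carr1I)
    ultimately show "A \<in> dd (dg_quot R12 (dd R12 ` K, K)) ` carrier (deg1 (dg_quot R12 (dd R12 ` K, K)))"
      by blast
  qed
  have pairT: "bij_betw (\<lambda>B. (snd (dg_induced f) B, snd (dg_induced g) B))
      (carrier (deg1 (dg_quot R12 (dd R12 ` K, K)))) (carrier (deg1 R1) \<times> carrier (deg1 R2))"
    unfolding bij_betw_def
  proof
    show "inj_on (\<lambda>B. (snd (dg_induced f) B, snd (dg_induced g) B)) (carrier (deg1 (dg_quot R12 (dd R12 ` K, K))))"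
    proof (rule inj_onI)
      fix B B' assume B: "B \<in> carrier (deg1 (dg_quot R12 (dd R12 ` K, K)))"
        and B': "B' \<in> carrier (deg1 (dg_quot R12 (dd R12 ` K, K)))"
        and e: "(snd (dg_induced f) B, snd (dg_induced g) B) = (snd (dg_induced f) B', snd (dg_induced g) B')"
      obtain x where x: "x \<in> carrier (deg1 R12)" "B = K +>\<^bsub>deg1 R12\<^esub> x"
        using Q.carr1[OF B[unfolded Q.Q_simps(2)]] by blast
      obtain x' where x': "x' \<in> carrier (deg1 R12)" "B' = K +>\<^bsub>deg1 R12\<^esub> x'"
        using Q.carr1[OF B'[unfolded Q.Q_simps(2)]] by blast
      have ef: "snd f x = snd f x'" and eg: "snd g x = snd g x'" using e x x' f1' g1' by auto
      have "snd f (x \<oplus>\<^bsub>deg1 R12\<^esub> \<ominus>\<^bsub>deg1 R12\<^esub> x') = \<zero>\<^bsub>deg1 R1\<^esub>"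
        using x x' ef f1(2) hom1_neg[OF R12 R1 hf x'(1)] f1(1)[OF x'(1)] by (simp add: M1.M.r_neg)
      moreover have "snd g (x \<oplus>\<^bsub>deg1 R12\<^esub> \<ominus>\<^bsub>deg1 R12\<^esub> x') = \<zero>\<^bsub>deg1 R2\<^esub>"
        using x x' eg g1(2) hom1_neg[OF R12 R2 hg x'(1)] g1(1)[OF x'(1)] by (simp add: M2.M.r_neg)
      ultimately have "x \<oplus>\<^bsub>deg1 R12\<^esub> \<ominus>\<^bsub>deg1 R12\<^esub> x' \<in> K" using x x' unfolding K_def by simp
      hence "x \<in> K +>\<^bsub>deg1 R12\<^esub> x'" using Q.J.a_rcos_module[OF x'(1) x(1)] by simp
      hence "K +>\<^bsub>deg1 R12\<^esub> x' = K +>\<^bsub>deg1 R12\<^esub> x" using Q.J.a_repr_independence'[OF _ x'(1)] by blast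
      thus "B = B'" using x x' by simp
    qed
    show "(\<lambda>B. (snd (dg_induced f) B, snd (dg_induced g) B)) ` carrier (deg1 (dg_quot R12 (dd R12 ` K, K)))
        = carrier (deg1 R1) \<times> carrier (deg1 R2)"
    proof
      show "(\<lambda>B. (snd (dg_induced f) B, snd (dg_induced g) B)) ` carrier (deg1 (dg_quot R12 (dd R12 ` K, K)))
        \<subseteq> carrier (deg1 R1) \<times> carrier (deg1 R2)"
      proof
        fix p assume "p \<in> (\<lambda>B. (snd (dg_induced f) B, snd (dg_induced g) B)) ` carrier (deg1 (dg_quot R12 (dd R12 ` K, K)))"
        then obtain B where B: "B \<in> carrier (deg1 (dg_quot R12 (dd R12 ` K, K)))"
          "p = (snd (dg_induced f) B, snd (dg_induced g) B)" by blast
        obtain x where x: "x \<in> carrier (deg1 R12)" "B = K +>\<^bsub>deg1 R12\<^esub> x"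
          using Q.carr1[OF B(1)[unfolded Q.Q_simps(2)]] by blast
        show "p \<in> carrier (deg1 R1) \<times> carrier (deg1 R2)" using B x f1' g1' f1(1) g1(1) by simp
      qed
      show "carrier (deg1 R1) \<times> carrier (deg1 R2) \<subseteq>
        (\<lambda>B. (snd (dg_induced f) B, snd (dg_induced g) B)) ` carrier (deg1 (dg_quot R12 (dd R12 ` K, K)))"
      proof
        fix p assume "p \<in> carrier (deg1 R1) \<times> carrier (deg1 R2)"
        then obtain a b where ab: "p = (a, b)" "a \<in> carrier (deg1 R1)" "b \<in> carrier (deg1 R2)" by blast
        obtain x where x: "x \<in> carrier (deg1 R12)" "snd f x = a" "snd g x = b" using pre[OF ab(2,3)] by blast
        have "K +>\<^bsub>deg1 R12\<^esub> x \<in> carrier (deg1 (dg_quot R12 (dd R12 ` K, K)))"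
          using x by (simp add: Q.Q_simps(2) Q.carr1I)
        moreover have "p = (snd (dg_induced f) (K +>\<^bsub>deg1 R12\<^esub> x), snd (dg_induced g) (K +>\<^bsub>deg1 R12\<^esub> x))"
          using x ab f1' g1' by simp
        ultimately show "p \<in> (\<lambda>B. (snd (dg_induced f) B, snd (dg_induced g) B)) ` carrier (deg1 (dg_quot R12 (dd R12 ` K, K)))"
          by blast
      qed
    qed
  qed
  have admT: "admissible R1 (dg_quot R12 (dd R12 ` K, K)) R2 (dg_induced f) (dg_induced g)"
    unfolding admissible_def corr_def using R1 R2 Q.Q_dgring hf' hg' qT pairT by simp
  have anam: "anamorphism R1 R12 R2 f g"
    unfolding anamorphism_def corr_def using R1 R2 R12 hf hg qf surj by simp
  have umor: "corr_mor R1 R2 R12 f g (dg_quot R12 (dd R12 ` K, K)) (dg_induced f) (dg_induced g)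
      (dg_quot_map R12 (dd R12 ` K, K))"
    unfolding corr_mor_def dg_eq_def dg_comp_def
    using Q.quot_hom f0' f1' g0' g1' by (simp add: dg_quot_map_def)
  have univ: "\<exists>k. corr_mor R1 R2 (dg_quot R12 (dd R12 ` K, K)) (dg_induced f) (dg_induced g) S f'' g'' k \<and>
      dg_eq R12 (dg_comp k (dg_quot_map R12 (dd R12 ` K, K))) h \<and>
      (\<forall>k'. corr_mor R1 R2 (dg_quot R12 (dd R12 ` K, K)) (dg_induced f) (dg_induced g) S f'' g'' k' \<and>
         dg_eq R12 (dg_comp k' (dg_quot_map R12 (dd R12 ` K, K))) h \<longrightarrow>
         dg_eq (dg_quot R12 (dd R12 ` K, K)) k' k)"
    if admS: "admissible R1 S R2 f'' g''" and cm: "corr_mor R1 R2 R12 f g S f'' g'' h"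
    for S :: "('m, 'n) dgr" and f'' g'' h
  proof -
    have S: "dgring S" and hf'': "dg_hom S R1 f''" and hg'': "dg_hom S R2 g''"
      and pS: "inj_on (\<lambda>x. (snd f'' x, snd g'' x)) (carrier (deg1 S))"
      using admS by (auto simp: admissible_def corr_def bij_betw_def)
    have hh: "dg_hom R12 S h" using cm by (simp add: corr_mor_def)
    have ef0: "\<And>r. r \<in> carrier (deg0 R12) \<Longrightarrow> fst f'' (fst h r) = fst f r"
      and ef1: "\<And>x. x \<in> carrier (deg1 R12) \<Longrightarrow> snd f'' (snd h x) = snd f x"
      and eg0: "\<And>r. r \<in> carrier (deg0 R12) \<Longrightarrow> fst g'' (fst h r) = fst g r"
      and eg1: "\<And>x. x \<in> carrier (deg1 R12) \<Longrightarrow> snd g'' (snd h x) = snd g x"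
      using cm by (auto simp: corr_mor_def dg_eq_def dg_comp_def)
    interpret MS: module "deg0 S" "deg1 S" by (rule dgringD(2)[OF S])
    have hk1: "snd h x = \<zero>\<^bsub>deg1 S\<^esub>" if "x \<in> K" for x
    proof -
      have xc: "x \<in> carrier (deg1 R12)" using that Kc by auto
      have "(snd f'' (snd h x), snd g'' (snd h x)) = (snd f'' \<zero>\<^bsub>deg1 S\<^esub>, snd g'' \<zero>\<^bsub>deg1 S\<^esub>)"
        using ef1[OF xc] eg1[OF xc] fk1[OF that] gk1[OF that] hom1_zero[OF S R1 hf''] hom1_zero[OF S R2 hg'']
        by simp
      thus ?thesis by (rule inj_onD[OF pS _ dg_homD(2)[OF hh xc] MS.M.zero_closed])
    qed
    have hk0: "fst h a = \<zero>\<^bsub>deg0 S\<^esub>" if "a \<in> dd R12 ` K" for a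
    proof -
      from that obtain k where k2: "a = dd R12 k" and k1: "k \<in> K" by (rule imageE)
      note k = k1 k2
      have kc: "k \<in> carrier (deg1 R12)" using subsetD[OF Kc k1] .
      have "fst h a = dd S (snd h k)" unfolding k(2) by (rule dg_homD(5)[OF hh kc, symmetric])
      also have "\<dots> = dd S \<zero>\<^bsub>deg1 S\<^esub>" by (simp only: hk1[OF k(1)])
      also have "\<dots> = \<zero>\<^bsub>deg0 S\<^esub>" by (rule dd_zero[OF S])
      finally show ?thesis .
    qed
    have hk: "dg_hom (dg_quot R12 (dd R12 ` K, K)) S (dg_induced h)"
      by (rule Q.ind_hom[OF S hh]) (auto intro: hk0 hk1)
    have h0': "\<And>r. r \<in> carrier (deg0 R12) \<Longrightarrow> fst (dg_induced h) (dd R12 ` K +>\<^bsub>deg0 R12\<^esub> r) = fst h r"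
      by (rule Q.ind0[OF S hh]) (auto intro: hk0 hk1)
    have h1': "\<And>x. x \<in> carrier (deg1 R12) \<Longrightarrow> snd (dg_induced h) (K +>\<^bsub>deg1 R12\<^esub> x) = snd h x"
      by (rule Q.ind1[OF S hh]) (auto intro: hk0 hk1)
    have c0: "\<exists>r\<in>carrier (deg0 R12). A = dd R12 ` K +>\<^bsub>deg0 R12\<^esub> r"
      if "A \<in> carrier (deg0 (dg_quot R12 (dd R12 ` K, K)))" for A
      using Q.carr0[OF that[unfolded Q.Q_simps(1)]] .
    have c1: "\<exists>x\<in>carrier (deg1 R12). B = K +>\<^bsub>deg1 R12\<^esub> x"
      if "B \<in> carrier (deg1 (dg_quot R12 (dd R12 ` K, K)))" for B
      using Q.carr1[OF that[unfolded Q.Q_simps(2)]] .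
    show ?thesis
    proof (intro exI conjI allI impI)
      show "corr_mor R1 R2 (dg_quot R12 (dd R12 ` K, K)) (dg_induced f) (dg_induced g) S f'' g'' (dg_induced h)"
        unfolding corr_mor_def dg_eq_def dg_comp_def
      proof (intro conjI ballI)
        show "dg_hom (dg_quot R12 (dd R12 ` K, K)) S (dg_induced h)" by (rule hk)
      next
        fix A assume "A \<in> carrier (deg0 (dg_quot R12 (dd R12 ` K, K)))"
        then obtain r where r: "r \<in> carrier (deg0 R12)" "A = dd R12 ` K +>\<^bsub>deg0 R12\<^esub> r" using c0 by blast
        show "fst (fst f'' \<circ> fst (dg_induced h), snd f'' \<circ> snd (dg_induced h)) A = fst (dg_induced f) A"
          using r h0' f0' ef0 by simp
        show "fst (fst g'' \<circ> fst (dg_induced h), snd g'' \<circ> snd (dg_induced h)) A = fst (dg_induced g) A"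
          using r h0' g0' eg0 by simp
      next
        fix B assume "B \<in> carrier (deg1 (dg_quot R12 (dd R12 ` K, K)))"
        then obtain x where x: "x \<in> carrier (deg1 R12)" "B = K +>\<^bsub>deg1 R12\<^esub> x" using c1 by blast
        show "snd (fst f'' \<circ> fst (dg_induced h), snd f'' \<circ> snd (dg_induced h)) B = snd (dg_induced f) B"
          using x h1' f1' ef1 by simp
        show "snd (fst g'' \<circ> fst (dg_induced h), snd g'' \<circ> snd (dg_induced h)) B = snd (dg_induced g) B"
          using x h1' g1' eg1 by simp
      qed
      show "dg_eq R12 (dg_comp (dg_induced h) (dg_quot_map R12 (dd R12 ` K, K))) h"
        unfolding dg_eq_def dg_comp_def dg_quot_map_def using h0' h1' by simp
    next
      fix k' assume "corr_mor R1 R2 (dg_quot R12 (dd R12 ` K, K)) (dg_induced f) (dg_induced g) S f'' g'' k' \<and>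
         dg_eq R12 (dg_comp k' (dg_quot_map R12 (dd R12 ` K, K))) h"
      hence e0: "\<And>r. r \<in> carrier (deg0 R12) \<Longrightarrow> fst k' (dd R12 ` K +>\<^bsub>deg0 R12\<^esub> r) = fst h r"
        and e1: "\<And>x. x \<in> carrier (deg1 R12) \<Longrightarrow> snd k' (K +>\<^bsub>deg1 R12\<^esub> x) = snd h x"
        by (auto simp: dg_eq_def dg_comp_def dg_quot_map_def)
      show "dg_eq (dg_quot R12 (dd R12 ` K, K)) k' (dg_induced h)"
        unfolding dg_eq_def
      proof (intro conjI ballI)
        fix A assume "A \<in> carrier (deg0 (dg_quot R12 (dd R12 ` K, K)))"
        then obtain r where r: "r \<in> carrier (deg0 R12)" "A = dd R12 ` K +>\<^bsub>deg0 R12\<^esub> r" using c0 by blast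
        show "fst k' A = fst (dg_induced h) A" using r e0 h0' by simp
      next
        fix B assume "B \<in> carrier (deg1 (dg_quot R12 (dd R12 ` K, K)))"
        then obtain x where x: "x \<in> carrier (deg1 R12)" "B = K +>\<^bsub>deg1 R12\<^esub> x" using c1 by blast
        show "snd k' B = snd (dg_induced h) B" using x e1 h1' by simp
      qed
    qed
  qed
  have adm: "is_Adm R1 R2 R12 f g (dg_quot R12 I) (dg_induced f) (dg_induced g)
           (dg_quot_map R12 I) TYPE(('m, 'n) dgr)"
    unfolding is_Adm_def Ieq using anam admT umor univ by blast
  show ?thesis using surj ker_acyc I_acyc adm by blast
qed

end
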